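(* For all integers $m\geq0$ and all $x$ with $0<|x|<1/4$, \[ \sum_{n=0}^\infty\binom{2n}{n}\frac{O_n}{n+m+1}x^n=\frac{\sqrt{1-4x}}{2x}\bigl(\ln\sqrt{1-4x}-1\bigr)+\frac{0^m}{2x^{m+1}}+\frac{m}{4^mx^{m+1}}\sum_{j=0}^{m-1}(-1)^j\binom{m-1}{j}A_j(x), \] where \[ A_j(x)=\frac{(1-4x)^{j+3/2}}{2j+3}\Bigl(\ln\sqrt{1-4x}-\frac{2j+4}{2j+3}\Bigr)+\frac{2j+4}{(2j+3)^2}. \]
   Context: $O_n=\sum_{j=1}^n\frac1{2j-1}$ is the $n$th odd harmonic number ($O_0=0$). Convention: $0^0=1$ and $0^m=0$ for $m\ge1$; the sum over $j$ is empty (equal to $0$) when $m=0$. *)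

theory Defs
  imports Complex_Main
begin

definition odd_harmonic :: "nat \<Rightarrow> real" where
  "odd_harmonic n = (\<Sum>j=1..n. 1 / (2 * real j - 1))"

definition A_term :: "nat \<Rightarrow> real \<Rightarrow> real" where
  "A_term j x = (1 - 4*x) powr (real j + 3/2) / (2 * real j + 3)
      * (ln (sqrt (1 - 4*x)) - (2 * real j + 4) / (2 * real j + 3))
    + (2 * real j + 4) / (2 * real j + 3)^2"

end

theory Submission
  imports Defs
begin


lemma summable_n_geom:
  fixes r :: real assumes "\<bar>r\<bar> < 1"
  shows "summable (\<lambda>n. real (Suc n) * r ^ n)"
proof -
  have "summable (\<lambda>n. diffs (\<lambda>_. 1::real) n * r ^ n)"
    by (rule termdiff_converges[where K=1]) (use assms in \<open>auto intro!: summable_geometric\<close>)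
  then show ?thesis by (simp add: diffs_def)
qed

lemma central_le: "real ((2*n) choose n) \<le> 4 ^ n"
proof -
  have "(2*n) choose n \<le> 2^(2*n)" by (rule binomial_le_pow2)
  also have "(2::nat)^(2*n) = 4^n" by (simp add: power_mult)
  finally show ?thesis by (metis of_nat_le_iff of_nat_numeral of_nat_power)
qed

lemma oh_nonneg: "0 \<le> odd_harmonic n"
  unfolding odd_harmonic_def by (intro sum_nonneg) auto

lemma oh_le: "odd_harmonic n \<le> real n"
proof -
  have "odd_harmonic n \<le> (\<Sum>j=1..n. 1)" unfolding odd_harmonic_def
    by (intro sum_mono) auto
  then show ?thesis by simp
qed

lemma oh_Suc: "odd_harmonic (Suc n) = odd_harmonic n + 1 / (2 * real n + 1)"
  unfolding odd_harmonic_def by simp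

lemma central_Suc: "real (Suc n) * real ((2*Suc n) choose Suc n) = 2 * (2 * real n + 1) * real ((2*n) choose n)"
proof -
  have e: "real ((2*k) choose k) = fact (2*k) / (fact k * fact k)" for k
    using binomial_fact[of k "2*k"] by simp
  have f1: "fact (2 * Suc n) = (2 * real n + 2) * (2 * real n + 1) * (fact (2*n) :: real)"
  proof -
    have "2 * Suc n = Suc (Suc (2*n))" by simp
    then show ?thesis by (simp only: fact_Suc) (simp add: algebra_simps)
  qed
  have f2: "fact (Suc n) = (real n + 1) * (fact n :: real)" by (simp add: fact_Suc)
  have pos: "(fact n :: real) > 0" by simp
  have pos2: "real n + 1 > 0" by simp
  have "(real n + 1) * ((2 * real n + 2) * (2 * real n + 1) * fact (2*n) / ((real n + 1) * fact n * ((real n + 1) * fact n)))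
     = 2 * (2 * real n + 1) * (fact (2*n) / (fact n * fact n))"
    using pos pos2 by (simp add: divide_simps) (simp add: algebra_simps)
  then show ?thesis unfolding e f1 f2 by (simp add: add.commute)
qed


definition "cb n = real ((2*n) choose n)"
definition "ca n = cb n * odd_harmonic n"

lemma cb_summable: assumes "\<bar>y\<bar> < 1/4" shows "summable (\<lambda>n. cb n * y ^ n)"
proof (rule summable_comparison_test)
  show "summable (\<lambda>n. real (Suc n) * (4*\<bar>y\<bar>) ^ n)" by (rule summable_n_geom) (use assms in auto)
  show "\<exists>N. \<forall>n\<ge>N. norm (cb n * y ^ n) \<le> real (Suc n) * (4*\<bar>y\<bar>) ^ n"
  proof (intro exI allI impI)
    fix n
    have "norm (cb n * y ^ n) = cb n * \<bar>y\<bar>^n" by (simp add: cb_def abs_mult power_abs)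
    also have "\<dots> \<le> 4^n * \<bar>y\<bar>^n" unfolding cb_def by (intro mult_right_mono central_le) auto
    also have "\<dots> \<le> real (Suc n) * (4*\<bar>y\<bar>) ^ n"
      by (simp add: power_mult_distrib) (use mult_right_mono[of 1 "1 + real n" "\<bar>y\<bar>^n"] in simp)
    finally show "norm (cb n * y ^ n) \<le> real (Suc n) * (4*\<bar>y\<bar>) ^ n" .
  qed
qed

lemma ca_summable: assumes "\<bar>y\<bar> < 1/4" shows "summable (\<lambda>n. ca n * y ^ n)"
proof (rule summable_comparison_test)
  show "summable (\<lambda>n. real (Suc n) * (4*\<bar>y\<bar>) ^ n)" by (rule summable_n_geom) (use assms in auto)
  show "\<exists>N. \<forall>n\<ge>N. norm (ca n * y ^ n) \<le> real (Suc n) * (4*\<bar>y\<bar>) ^ n"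
  proof (intro exI allI impI)
    fix n
    have "norm (ca n * y ^ n) = cb n * odd_harmonic n * \<bar>y\<bar>^n"
      using oh_nonneg[of n] by (simp add: ca_def cb_def abs_mult power_abs)
    also have "\<dots> \<le> 4^n * real (Suc n) * \<bar>y\<bar>^n" unfolding cb_def
      using order_trans[OF oh_le[of n], of "real (Suc n)"] oh_nonneg[of n] by (intro mult_right_mono mult_mono central_le) auto
    also have "\<dots> = real (Suc n) * (4*\<bar>y\<bar>) ^ n" by (simp add: power_mult_distrib)
    finally show "norm (ca n * y ^ n) \<le> real (Suc n) * (4*\<bar>y\<bar>) ^ n" .
  qed
qed

lemma xdiffs:
  fixes c :: "nat \<Rightarrow> real"
  assumes "summable (\<lambda>n. diffs c n * x^n)"
  shows "(\<lambda>n. real n * c n * x^n) sums (x * (\<Sum>n. diffs c n * x^n))"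
proof -
  have "(\<lambda>n. x * (diffs c n * x^n)) sums (x * (\<Sum>n. diffs c n * x^n))"
    by (rule sums_mult) (use assms in \<open>simp add: summable_sums\<close>)
  moreover have "(\<lambda>n. x * (diffs c n * x^n)) = (\<lambda>n. (\<lambda>n. real n * c n * x^n) (Suc n))"
    by (simp add: diffs_def algebra_simps)
  ultimately have "(\<lambda>n. (\<lambda>n. real n * c n * x^n) (Suc n)) sums (x * (\<Sum>n. diffs c n * x^n))"
    by simp
  then show ?thesis by (subst (asm) sums_Suc_iff) simp
qed

lemma const_lemma:
  fixes f :: "real \<Rightarrow> real"
  assumes d: "\<And>y. \<bar>y\<bar> < 1/4 \<Longrightarrow> DERIV f y :> 0" and x: "\<bar>x\<bar> < 1/4"
  shows "f x = f 0"
proof -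
  have c: "continuous_on {a..b} f" if "\<bar>a\<bar> < 1/4" "\<bar>b\<bar> < 1/4" for a b
    by (rule continuous_at_imp_continuous_on) (use that in \<open>auto intro!: DERIV_isCont[OF d]\<close>)
  consider "x < 0" | "x = 0" | "x > 0" by linarith
  then show ?thesis
  proof cases
    case 1
    have "f 0 = f x" by (rule DERIV_isconst_end[OF 1 c]) (use x in \<open>auto intro!: d\<close>)
    then show ?thesis by simp
  next
    case 3
    show ?thesis by (rule DERIV_isconst_end[OF 3 c]) (use x in \<open>auto intro!: d\<close>)
  qed simp
qed


lemma lin_deriv: "DERIV (\<lambda>y::real. 1 - 4*y) y :> -4"
  by (auto intro!: derivative_eq_intros)

lemma sqrt_deriv: assumes "y < 1/4" shows "DERIV (\<lambda>y. sqrt (1 - 4*y)) y :> -2 / sqrt (1 - 4*y)"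
proof -
  have "DERIV (\<lambda>y. sqrt (1 - 4*y)) y :> inverse (sqrt (1-4*y)) / 2 * (-4)"
    by (rule DERIV_chain2[OF DERIV_real_sqrt lin_deriv]) (use assms in simp)
  then show ?thesis by (simp add: field_simps)
qed

lemma ln_deriv: fixes y :: real assumes "y < 1/4" shows "DERIV (\<lambda>y. ln (1 - 4*y)) y :> -4 / (1 - 4*y)"
proof -
  have "DERIV (\<lambda>y. ln (1 - 4*y)) y :> inverse (1-4*y) * (-4)"
    by (rule DERIV_chain2[OF DERIV_ln lin_deriv]) (use assms in simp)
  then show ?thesis by (simp add: field_simps)
qed

lemma cb_diffs: "diffs cb n = 4 * (real n * cb n) + 2 * cb n"
  using central_Suc[of n] by (simp add: diffs_def cb_def algebra_simps)

lemma ca_diffs: "diffs ca n = 4 * (real n * ca n) + 2 * ca n + 2 * cb n"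
proof -
  have "diffs ca n = real (Suc n) * cb (Suc n) * odd_harmonic (Suc n)"
    by (simp add: diffs_def ca_def)
  also have "\<dots> = 2 * (2 * real n + 1) * cb n * (odd_harmonic n + 1 / (2 * real n + 1))"
    using central_Suc[of n] by (simp add: cb_def oh_Suc)
  also have "\<dots> = 4 * (real n * ca n) + 2 * ca n + 2 * cb n"
    by (simp add: ca_def field_simps)
  finally show ?thesis .
qed

lemma B_closed:
  assumes x: "\<bar>x\<bar> < 1/4"
  shows "(\<Sum>n. cb n * x ^ n) = 1 / sqrt (1 - 4*x)"
proof -
  define Bf where "Bf y = (\<Sum>n. cb n * y ^ n)" for y :: real
  define Bd where "Bd y = (\<Sum>n. diffs cb n * y ^ n)" for y :: real
  have dB: "DERIV Bf y :> Bd y" if "\<bar>y\<bar> < 1/4" for y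
    unfolding Bf_def Bd_def by (rule termdiffs_strong'[where K="1/4"]) (use that cb_summable in auto)
  have ode: "(1 - 4*y) * Bd y = 2 * Bf y" if y: "\<bar>y\<bar> < 1/4" for y
  proof -
    have sd: "summable (\<lambda>n. diffs cb n * y^n)"
      by (rule termdiff_converges[where K="1/4"]) (use y cb_summable in auto)
    have "(\<lambda>n. 4 * (real n * cb n * y^n) + 2 * (cb n * y^n)) sums (4 * (y * Bd y) + 2 * Bf y)"
      unfolding Bd_def Bf_def
      by (intro sums_add sums_mult xdiffs sd summable_sums cb_summable y)
    then have "(\<lambda>n. diffs cb n * y^n) sums (4 * (y * Bd y) + 2 * Bf y)"
      by (simp add: cb_diffs algebra_simps)
    moreover have "(\<lambda>n. diffs cb n * y^n) sums Bd y" unfolding Bd_def using sd by (simp add: summable_sums)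
    ultimately have "Bd y = 4 * (y * Bd y) + 2 * Bf y" using sums_unique2 by blast
    then show ?thesis by (simp add: algebra_simps)
  qed
  have d0: "DERIV (\<lambda>y. Bf y * sqrt (1 - 4*y)) y :> 0" if y: "\<bar>y\<bar> < 1/4" for y
  proof -
    have "DERIV (\<lambda>y. Bf y * sqrt (1 - 4*y)) y :> Bf y * (-2 / sqrt (1 - 4*y)) + Bd y * sqrt (1 - 4*y)"
      by (rule DERIV_mult'[OF dB[OF y] sqrt_deriv]) (use y in auto)
    moreover have "Bf y * (-2 / sqrt (1 - 4*y)) + Bd y * sqrt (1 - 4*y) = 0"
    proof -
      have s: "sqrt (1 - 4*y) > 0" using y by simp
      have "Bf y * (-2 / sqrt (1 - 4*y)) + Bd y * sqrt (1 - 4*y) = ((1 - 4*y) * Bd y - 2 * Bf y) / sqrt (1 - 4*y)"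
        using s y by (simp add: field_simps)
      then show ?thesis using ode[OF y] by simp
    qed
    ultimately show ?thesis by simp
  qed
  have "Bf x * sqrt (1 - 4*x) = Bf 0 * sqrt (1 - 4*0)"
    by (rule const_lemma[where f="\<lambda>y. Bf y * sqrt (1 - 4*y)", OF d0 x])
  moreover have "Bf 0 = 1" unfolding Bf_def cb_def by simp
  ultimately have "Bf x * sqrt (1 - 4*x) = 1" by simp
  moreover have "sqrt (1 - 4*x) > 0" using x by simp
  ultimately show ?thesis unfolding Bf_def by (simp add: field_simps)
qed


lemma F_closed:
  assumes x: "\<bar>x\<bar> < 1/4"
  shows "(\<Sum>n. ca n * x ^ n) = - ln (1 - 4*x) / (2 * sqrt (1 - 4*x))"
proof -
  define Ff where "Ff y = (\<Sum>n. ca n * y ^ n)" for y :: real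
  define Fd where "Fd y = (\<Sum>n. diffs ca n * y ^ n)" for y :: real
  have dF: "DERIV Ff y :> Fd y" if "\<bar>y\<bar> < 1/4" for y
    unfolding Ff_def Fd_def by (rule termdiffs_strong'[where K="1/4"]) (use that ca_summable in auto)
  have ode: "(1 - 4*y) * Fd y = 2 * Ff y + 2 / sqrt (1 - 4*y)" if y: "\<bar>y\<bar> < 1/4" for y
  proof -
    have sd: "summable (\<lambda>n. diffs ca n * y^n)"
      by (rule termdiff_converges[where K="1/4"]) (use y ca_summable in auto)
    have "(\<lambda>n. 4 * (real n * ca n * y^n) + 2 * (ca n * y^n) + 2 * (cb n * y^n)) sums (4 * (y * Fd y) + 2 * Ff y + 2 * (1 / sqrt (1 - 4*y)))"
      unfolding Fd_def Ff_def B_closed[OF y, symmetric]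
      by (intro sums_add sums_mult xdiffs sd summable_sums cb_summable ca_summable y)
    then have "(\<lambda>n. diffs ca n * y^n) sums (4 * (y * Fd y) + 2 * Ff y + 2 * (1 / sqrt (1 - 4*y)))"
      by (simp add: ca_diffs algebra_simps)
    moreover have "(\<lambda>n. diffs ca n * y^n) sums Fd y" unfolding Fd_def using sd by (simp add: summable_sums)
    ultimately have "Fd y = 4 * (y * Fd y) + 2 * Ff y + 2 * (1 / sqrt (1 - 4*y))" using sums_unique2 by blast
    then show ?thesis by (simp add: algebra_simps)
  qed
  have d0: "DERIV (\<lambda>y. Ff y * sqrt (1 - 4*y) + ln (1 - 4*y) / 2) y :> 0" if y: "\<bar>y\<bar> < 1/4" for y
  proof -
    have "DERIV (\<lambda>y. Ff y * sqrt (1 - 4*y) + ln (1 - 4*y) / 2) y :> (Ff y * (-2 / sqrt (1 - 4*y)) + Fd y * sqrt (1 - 4*y)) + (-4 / (1 - 4*y)) / 2"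
      by (rule DERIV_add DERIV_mult'[OF dF[OF y] sqrt_deriv] DERIV_cdivide ln_deriv | use y in simp)+
    moreover have "(Ff y * (-2 / sqrt (1 - 4*y)) + Fd y * sqrt (1 - 4*y)) + (-4 / (1 - 4*y)) / 2 = 0"
    proof -
      have s: "sqrt (1 - 4*y) > 0" using y by simp
      have ss: "sqrt (1 - 4*y) * sqrt (1 - 4*y) = 1 - 4*y" using y by simp
      have "Ff y * (-2 / sqrt (1 - 4*y)) + Fd y * sqrt (1 - 4*y) = ((1 - 4*y) * Fd y - 2 * Ff y) / sqrt (1 - 4*y)"
        using s y by (simp add: field_simps)
      also have "\<dots> = (2 / sqrt (1 - 4*y)) / sqrt (1 - 4*y)" using ode[OF y] by simp
      also have "\<dots> = 2 / (1 - 4*y)" by (simp only: divide_divide_eq_left ss)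
      finally show ?thesis using y by (simp add: field_simps)
    qed
    ultimately show ?thesis by simp
  qed
  have "Ff x * sqrt (1 - 4*x) + ln (1 - 4*x) / 2 = Ff 0 * sqrt (1 - 4*0) + ln (1 - 4*0) / 2"
    by (rule const_lemma[where f="\<lambda>y. Ff y * sqrt (1 - 4*y) + ln (1 - 4*y) / 2", OF d0 x])
  moreover have "Ff 0 = 0" unfolding Ff_def ca_def by (simp add: odd_harmonic_def)
  ultimately have "Ff x * sqrt (1 - 4*x) = - ln (1 - 4*x) / 2" by simp
  moreover have "sqrt (1 - 4*x) > 0" using x by simp
  ultimately show ?thesis unfolding Ff_def by (simp add: field_simps)
qed



definition "phi j u = u^(2*j+3) / (2 * real j + 3) * (ln u - (2 * real j + 4) / (2 * real j + 3))
   + (2 * real j + 4) / (2 * real j + 3)^2"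

lemma alg1: "(a::real) > 0 \<Longrightarrow> (a * P * (L - (a+1)/a) + P) / a = P * (L - 1)"
  by (simp add: field_simps)

lemma phi_deriv: assumes "u > 0" shows "DERIV (phi j) u :> u^(2*j+2) * (ln u - 1)"
proof -
  have e1: "u * (u * u ^ (2 * j)) = u^(2*j+2)" by (simp add: power_add)
  have e2': "u ^ (2 * j + 3) = u^(2*j+2) * u" by (simp add: power_add power3_eq_cube power2_eq_square)
  have e2: "u ^ (2 * j + 3) / u = u^(2*j+2)" using assms by (simp add: e2')
  have e3: "2 * real j + 4 = (2 * real j + 3) + 1" by simp
  show ?thesis
  unfolding phi_def[abs_def] using assms
  apply (auto intro!: derivative_eq_intros)
  apply (simp only: e1 e2 e3)
  apply (rule alg1)
  apply simp
  done
qed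
lemma A_term_phi: assumes "x < 1/4" shows "A_term j x = phi j (sqrt (1 - 4*x))"
proof -
  have s: "1 - 4*x > 0" using assms by simp
  have e: "real (2*j+3) * (1/2) = real j + 3/2" by simp
  have "((1 - 4*x) powr (1/2)) ^ (2*j+3) = (1 - 4*x) powr (real (2*j+3) * (1/2))"
    by (rule powr_power) (use s in simp)
  then have "(1 - 4*x) powr (real j + 3/2) = ((1 - 4*x) powr (1/2)) ^ (2*j+3)"
    by (simp only: e)
  also have "\<dots> = sqrt (1 - 4*x) ^ (2*j+3)" using s by (simp add: powr_half_sqrt)
  finally show ?thesis unfolding A_term_def phi_def by simp
qed

lemma binom_alt: "(\<Sum>j=0..<Suc k. (-1) ^ j * real (k choose j) * w ^ j) = (1 - w) ^ k"
proof -
  have a: "(-w + 1) ^ k = (\<Sum>j\<le>k. real (k choose j) * (-w)^j * 1^(k-j))" by (rule binomial_ring)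
  have b: "-w + 1 = 1 - w" by simp
  have c: "(\<Sum>j\<le>k. real (k choose j) * (-w)^j * 1^(k-j)) = (\<Sum>j\<le>k. (-1) ^ j * real (k choose j) * w ^ j)"
    by (rule sum.cong[OF refl]) (simp only: power_minus[of w] power_one mult_1_right mult.commute mult.left_commute)
  have d: "{..k} = {0..<Suc k}" by auto
  have "(1 - w) ^ k = (-w + 1) ^ k" by (simp only: b)
  also note a
  also note c
  also note d
  finally show ?thesis by (rule sym)
qed


definition psi :: "real \<Rightarrow> real" where "psi v = v / 2 * (ln v - 1)"

lemma psi_deriv: assumes "v > 0" shows "DERIV psi v :> ln v / 2"
proof -
  have "DERIV (\<lambda>v. v / 2 * (ln v - 1)) v :> v / 2 * (1 / v - 0) + 1 / 2 * (ln v - 1)"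
    by (rule DERIV_mult'[OF DERIV_cdivide[OF DERIV_ident] DERIV_diff[OF DERIV_ln_divide[OF assms] DERIV_const]])
  then show ?thesis unfolding psi_def[abs_def] using assms by (simp add: field_simps)
qed

definition "Gf m y = y^m * psi (sqrt (1 - 4*y)) + (0::real)^m / 2
   + real m / 4^m * (\<Sum>j=0..<m. (-1)^j * real ((m - 1) choose j) * phi j (sqrt (1 - 4*y)))"

lemma G_deriv:
  assumes y: "y < 1/4"
  shows "DERIV (Gf m) y :> y^m * (- ln (1 - 4*y) / (2 * sqrt (1 - 4*y)))"
proof -
  define u where "u = sqrt (1 - 4*y)"
  have u: "u > 0" using y by (simp add: u_def)
  have d1: "DERIV (\<lambda>y. y^m * psi (sqrt (1 - 4*y))) y :> y^m * (ln u / 2 * (-2 / u)) + real m * y^(m - 1) * psi u"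
    using DERIV_mult'[OF DERIV_pow DERIV_chain2[OF psi_deriv sqrt_deriv[OF y]], of m] u
    by (simp add: u_def)
  have d3: "DERIV (\<lambda>y. \<Sum>j=0..<m. (-1)^j * real ((m - 1) choose j) * phi j (sqrt (1 - 4*y))) y :>
     (\<Sum>j=0..<m. (-1)^j * real ((m - 1) choose j) * (u^(2*j+2) * (ln u - 1) * (-2 / u)))"
    apply (rule DERIV_sum)
    apply (rule DERIV_cmult)
    using DERIV_chain2[OF phi_deriv sqrt_deriv[OF y]] u by (simp add: u_def)
  have dG: "DERIV (Gf m) y :> (y^m * (ln u / 2 * (-2 / u)) + real m * y^(m - 1) * psi u) + 0
      + real m / 4^m * (\<Sum>j=0..<m. (-1)^j * real ((m - 1) choose j) * (u^(2*j+2) * (ln u - 1) * (-2 / u)))"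
    unfolding Gf_def[abs_def]
    by (intro DERIV_add DERIV_cmult d1 d3 DERIV_const)
  have lnu: "ln (1 - 4*y) = 2 * ln u" using y by (simp add: u_def ln_sqrt)
  have eq: "(y^m * (ln u / 2 * (-2 / u)) + real m * y^(m - 1) * psi u) + 0
      + real m / 4^m * (\<Sum>j=0..<m. (-1)^j * real ((m - 1) choose j) * (u^(2*j+2) * (ln u - 1) * (-2 / u)))
      = y^m * (- ln (1 - 4*y) / (2 * sqrt (1 - 4*y)))"
  proof (cases m)
    case 0
    then show ?thesis using u by (simp add: lnu u_def[symmetric])
  next
    case (Suc k)
    have uu: "u^2 = 1 - 4*y" using y by (simp add: u_def)
    have pw: "u^(2*j+2) = u^2 * (u^2)^j" for j by (simp add: power_add power_mult power2_eq_square)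
    have S0: "(\<Sum>j=0..<m. (-1)^j * real ((m - 1) choose j) * (u^(2*j+2) * (ln u - 1) * (-2 / u)))
        = (u^2 * (ln u - 1) * (-2 / u)) * (\<Sum>j=0..<Suc k. (-1)^j * real (k choose j) * (u^2)^j)"
      unfolding Suc sum_distrib_left
      by (rule sum.cong[OF refl]) (simp only: pw diff_Suc_1, simp only: mult_ac)
    have S1: "(\<Sum>j=0..<Suc k. (-1)^j * real (k choose j) * (u^2)^j) = (4 * y)^k"
      by (simp only: binom_alt uu) simp
    have S2: "(u^2 * (ln u - 1) * (-2 / u)) * (4 * y)^k = -2 * u * (ln u - 1) * 4^k * y^k"
      using u by (simp add: power2_eq_square power_mult_distrib)
    have S: "(\<Sum>j=0..<m. (-1)^j * real ((m - 1) choose j) * (u^(2*j+2) * (ln u - 1) * (-2 / u)))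
        = -2 * u * (ln u - 1) * 4^k * y^k" unfolding S0 S1 S2 ..
    have t: "real m / 4^m * (-2 * u * (ln u - 1) * 4^k * y^k) = - (real m * y^(m-1) * psi u)"
    proof -
      have f4: "(4::real)^m = 4 * 4^k" by (simp add: Suc)
      have mk: "m - 1 = k" by (simp add: Suc)
      have p: "(4::real)^k > 0" by simp
      have "real m / (4 * 4^k) * (-2 * u * (ln u - 1) * 4^k * y^k) = - (real m * y^k * (u / 2 * (ln u - 1)))"
        using p by (simp add: field_simps)
      then show ?thesis by (simp only: f4 mk psi_def)
    qed
    have su: "sqrt (1 - 4*y) = u" by (simp add: u_def)
    show ?thesis unfolding S t lnu su using u by simp
  qed
  show ?thesis using dG unfolding eq .
qed

lemma G_zero: "Gf m 0 = 0"
proof -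
  have "phi j 1 = 0" for j
  proof -
    have "(2 * real j + 3) > 0" by simp
    then show ?thesis unfolding phi_def by (simp add: field_simps power2_eq_square)
  qed
  then show ?thesis unfolding Gf_def psi_def by simp
qed



theorem theorem22:
  fixes m :: nat and x :: real
  assumes "0 < \<bar>x\<bar>" and "\<bar>x\<bar> < 1/4"
  shows "(\<lambda>n. real ((2*n) choose n) * odd_harmonic n / real (n + m + 1) * x ^ n) sums
    (sqrt (1 - 4*x) / (2*x) * (ln (sqrt (1 - 4*x)) - 1)
     + (0::real) ^ m / (2 * x ^ (m + 1))
     + real m / (4 ^ m * x ^ (m + 1)) *
         (\<Sum>j=0..<m. (-1) ^ j * real ((m - 1) choose j) * A_term j x))"
proof -
  have x0: "x \<noteq> 0" using assms by auto
  have x4: "\<bar>x\<bar> < 1/4" using assms by auto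
  define c where "c n = (if m < n then ca (n - m - 1) / real n else 0)" for n
  define Hf where "Hf y = (\<Sum>n. c n * y ^ n)" for y :: real
  have cshift: "c (k + (m+1)) * y ^ (k + (m+1)) = ca k / real (k + m + 1) * y ^ k * y ^ (m+1)" for k y
    by (simp add: c_def power_add)
  have csum: "summable (\<lambda>n. c n * y ^ n)" if y: "\<bar>y\<bar> < 1/4" for y
  proof -
    have "summable (\<lambda>k. c (k + (m+1)) * y ^ (k + (m+1)))"
    proof (rule summable_comparison_test)
      show "summable (\<lambda>k. ca k * \<bar>y\<bar> ^ k * \<bar>y\<bar> ^ (m+1))"
        by (intro summable_mult2 ca_summable) (use y in simp)
      show "\<exists>N. \<forall>n\<ge>N. norm (c (n + (m+1)) * y ^ (n + (m+1))) \<le> ca n * \<bar>y\<bar> ^ n * \<bar>y\<bar> ^ (m+1)"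
      proof (intro exI allI impI)
        fix n :: nat
        have ca0: "ca n \<ge> 0" unfolding ca_def cb_def using oh_nonneg by simp
        have "norm (c (n + (m+1)) * y ^ (n + (m+1))) = ca n / real (n + m + 1) * \<bar>y\<bar> ^ n * \<bar>y\<bar> ^ (m+1)"
          unfolding cshift using ca0 by (simp add: abs_mult power_abs)
        also have "\<dots> \<le> ca n * \<bar>y\<bar> ^ n * \<bar>y\<bar> ^ (m+1)"
        proof -
          have "ca n / real (n + m + 1) \<le> ca n"
            using ca0 mult_left_mono[of 1 "real (n + m + 1)" "ca n"] by (simp add: divide_le_eq)
          then show ?thesis by (intro mult_right_mono) auto
        qed
        finally show "norm (c (n + (m+1)) * y ^ (n + (m+1))) \<le> ca n * \<bar>y\<bar> ^ n * \<bar>y\<bar> ^ (m+1)" .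
      qed
    qed
    then show ?thesis using summable_iff_shift[of "\<lambda>n. c n * y ^ n" "m+1"] by simp
  qed
  have dc: "diffs c n = (if m \<le> n then ca (n - m) else 0)" for n
    by (simp add: diffs_def c_def)
  have Hd: "(\<lambda>n. diffs c n * y ^ n) sums (y ^ m * (- ln (1 - 4*y) / (2 * sqrt (1 - 4*y))))"
    if y: "\<bar>y\<bar> < 1/4" for y
  proof -
    have "(\<lambda>k. ca k * y ^ k * y ^ m) sums ((\<Sum>n. ca n * y ^ n) * y ^ m)"
      by (intro sums_mult2 summable_sums ca_summable y)
    then have "(\<lambda>k. diffs c (k + m) * y ^ (k + m)) sums (y ^ m * (- ln (1 - 4*y) / (2 * sqrt (1 - 4*y))))"
      by (simp add: dc F_closed[OF y] power_add mult_ac)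
    then show ?thesis by (subst (asm) sums_zero_iff_shift) (simp_all add: dc)
  qed
  have dH: "DERIV Hf y :> y ^ m * (- ln (1 - 4*y) / (2 * sqrt (1 - 4*y)))" if y: "\<bar>y\<bar> < 1/4" for y
  proof -
    have "DERIV Hf y :> (\<Sum>n. diffs c n * y ^ n)"
      unfolding Hf_def[abs_def] by (rule termdiffs_strong'[where K="1/4"]) (use y csum in auto)
    then show ?thesis using sums_unique[OF Hd[OF y]] by simp
  qed
  have d0: "DERIV (\<lambda>y. Hf y - Gf m y) y :> 0" if y: "\<bar>y\<bar> < 1/4" for y
  proof -
    have y1: "y < 1/4" using y by simp
    show ?thesis using DERIV_diff[OF dH[OF y] G_deriv[OF y1, of m]] by simp
  qed
  have "Hf x - Gf m x = Hf 0 - Gf m 0"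
    by (rule const_lemma[where f="\<lambda>y. Hf y - Gf m y", OF d0 x4])
  moreover have "Hf 0 = 0" unfolding Hf_def by (simp add: c_def)
  ultimately have HG: "Hf x = Gf m x" by (simp add: G_zero)
  have "(\<lambda>k. c (k + (m+1)) * x ^ (k + (m+1))) sums Hf x"
  proof (subst sums_zero_iff_shift)
    show "(\<lambda>n. c n * x ^ n) sums Hf x" unfolding Hf_def by (rule summable_sums[OF csum[OF x4]])
  qed (simp add: c_def)
  then have "(\<lambda>k. ca k / real (k + m + 1) * x ^ k * x ^ (m+1)) sums Hf x" by (simp only: cshift)
  then have "(\<lambda>k. ca k / real (k + m + 1) * x ^ k * x ^ (m+1) / x ^ (m+1)) sums (Hf x / x ^ (m+1))"
    by (rule sums_divide)
  then have S: "(\<lambda>k. real ((2*k) choose k) * odd_harmonic k / real (k + m + 1) * x ^ k) sums (Gf m x / x ^ (m+1))"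
    using x0 by (simp add: HG ca_def cb_def)
  have x1: "x < 1/4" using x4 by simp
  have "Gf m x / x ^ (m+1) = sqrt (1 - 4*x) / (2*x) * (ln (sqrt (1 - 4*x)) - 1)
     + (0::real) ^ m / (2 * x ^ (m + 1))
     + real m / (4 ^ m * x ^ (m + 1)) *
         (\<Sum>j=0..<m. (-1) ^ j * real ((m - 1) choose j) * A_term j x)"
    unfolding Gf_def A_term_phi[OF x1] psi_def using x0
    by (simp add: field_simps)
  with S show ?thesis by simp
qed

end
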